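(* Let $(n_j)_{j\in\mathbb N}$ be a strictly increasing sequence of positive integers and $\omega\in\Sigma$. If $\lim_{j\to\infty}A_{n_j}g(\omega)=0$ and $\lim_{j\to\infty}A_{n_j}f(\omega)$ exists, then $\lim_{j\to\infty}A_{n_j}f(\omega)\in A$. In particular, if $\lim_{n\to\infty}A_ng(\omega)=0$ and $\lim_{n\to\infty}A_nf(\omega)$ exists, then $\lim_{n\to\infty}A_nf(\omega)\in A$.
   Context: Let $T_1,\dots,T_m:[0,1]\to[0,1]$ be $C^1$ maps with $T_i'>0$, $T_i((0,1))\cap T_j((0,1))=\emptyset$ for $i\ne j$, and $\operatorname{diam}(T_{i_1}\circ\cdots\circ T_{i_n}([0,1]))\to0$ uniformly. $\Sigma=\{1,\dots,m\}^{\mathbb N}$ with shift $\sigma$, $\Pi(\omega)=\lim_nT_{\omega_1}\circ\cdots\circ T_{\omega_n}(0)$. Each $T_i$ fixes $x_i=\Pi(i,i,i,\dots)$, with $T_i'(x_i)\le1$ and $0<T_i'(x)<1$ for $x\ne x_i$; $\mathcal I=\{i:T_i'(x_i)=1\}$ is nonempty. $g(\omega)=-\log T'_{\omega_1}(\Pi(\sigma\omega))$, $f:\Sigma\to\mathbb R$ continuous, $A_nF=\frac1n\sum_{i=0}^{n-1}F\circ\sigma^i$, and $A=[\min_{i\in\mathcal I}f(i,i,\dots),\max_{i\in\mathcal I}f(i,i,\dots)]$. *)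

theory Defs
  imports "HOL-Analysis.Analysis"
begin

text \<open>Symbolic space: sequences with letters in {1..m}; index 0 is the first letter.
  The type nat => nat carries the product topology (Function_Topology), so
  continuity on this set is continuity on Sigma.\<close>
definition Sigma_m :: "nat \<Rightarrow> (nat \<Rightarrow> nat) set" where
  "Sigma_m m = {\<omega>. \<forall>k. \<omega> k \<in> {1..m}}"

definition shift :: "(nat \<Rightarrow> nat) \<Rightarrow> (nat \<Rightarrow> nat)" where
  "shift \<omega> = (\<lambda>k. \<omega> (Suc k))"

definition comp_word :: "(nat \<Rightarrow> real \<Rightarrow> real) \<Rightarrow> (nat \<Rightarrow> nat) \<Rightarrow> nat \<Rightarrow> real \<Rightarrow> real" where
  "comp_word T \<omega> n = foldr (\<circ>) (map (\<lambda>k. T (\<omega> k)) [0..<n]) id"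

definition coding :: "(nat \<Rightarrow> real \<Rightarrow> real) \<Rightarrow> (nat \<Rightarrow> nat) \<Rightarrow> real" where
  "coding T \<omega> = lim (\<lambda>n. comp_word T \<omega> n 0)"

definition geom_pot :: "(nat \<Rightarrow> real \<Rightarrow> real) \<Rightarrow> (nat \<Rightarrow> real \<Rightarrow> real) \<Rightarrow> (nat \<Rightarrow> nat) \<Rightarrow> real" where
  "geom_pot T T' \<omega> = - ln (T' (\<omega> 0) (coding T (shift \<omega>)))"

definition birkhoff_avg :: "nat \<Rightarrow> ((nat \<Rightarrow> nat) \<Rightarrow> real) \<Rightarrow> (nat \<Rightarrow> nat) \<Rightarrow> real" where
  "birkhoff_avg n F \<omega> = (1 / real n) * (\<Sum>i<n. F ((shift ^^ i) \<omega>))"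

definition const_word :: "nat \<Rightarrow> (nat \<Rightarrow> nat)" where
  "const_word i = (\<lambda>_. i)"

end

theory Submission
  imports Defs
begin


lemma comp_word_0[simp]: "comp_word T \<eta> 0 = id"
  by (simp add: comp_word_def)

lemma comp_word_Suc: "comp_word T \<eta> (Suc n) = T (\<eta> 0) \<circ> comp_word T (shift \<eta>) n"
proof -
  have "[0..<Suc n] = 0 # map Suc [0..<n]"
    by (simp add: map_Suc_upt upt_conv_Cons)
  then show ?thesis
    by (simp add: comp_word_def shift_def comp_def)
qed

lemma funpow_shift: "(shift ^^ k) \<eta> = (\<lambda>j. \<eta> (j + k))"
  by (induction k arbitrary: \<eta>) (auto simp: shift_def funpow_Suc_right)

lemma comp_word_add: "comp_word T \<eta> (n + k) x = comp_word T \<eta> n (comp_word T ((shift ^^ n) \<eta>) k x)"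
proof (induction n arbitrary: \<eta>)
  case 0 then show ?case by simp
next
  case (Suc n)
  have "(shift ^^ n) (shift \<eta>) = shift ((shift ^^ n) \<eta>)" by (metis comp_apply funpow_Suc_right funpow_swap1)
  then show ?case using Suc[of "shift \<eta>"] by (simp add: comp_word_Suc funpow_Suc_right)
qed

lemma shift_Sigma: "\<eta> \<in> Sigma_m m \<Longrightarrow> shift \<eta> \<in> Sigma_m m"
  by (simp add: Sigma_m_def shift_def)

lemma funpow_shift_Sigma: "\<eta> \<in> Sigma_m m \<Longrightarrow> (shift ^^ k) \<eta> \<in> Sigma_m m"
  by (simp add: Sigma_m_def funpow_shift)

lemma const_word_Sigma: "i \<in> {1..m} \<Longrightarrow> const_word i \<in> Sigma_m m"
  by (simp add: Sigma_m_def const_word_def)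

lemma shift_const[simp]: "shift (const_word i) = const_word i"
  by (simp add: shift_def const_word_def)

lemma comp_word_in:
  assumes "\<And>i. i \<in> {1..m} \<Longrightarrow> T i ` {0..1} \<subseteq> {0..1}" "\<eta> \<in> Sigma_m m" "y \<in> {0..1}"
  shows "comp_word T \<eta> n y \<in> {0..1}"
  using assms(2)
proof (induction n arbitrary: \<eta>)
  case 0 then show ?case using assms by simp
next
  case (Suc n)
  have "comp_word T (shift \<eta>) n y \<in> {0..1}" using Suc shift_Sigma by blast
  moreover have "\<eta> 0 \<in> {1..m}" using Suc.prems by (simp add: Sigma_m_def)
  ultimately show ?case using assms(1)[of "\<eta> 0"] by (force simp: comp_word_Suc)
qed

lemma Sigma_compact: "compact (Sigma_m m)"
proof -
  have "Sigma_m m = PiE UNIV (\<lambda>_. {1..m})"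
    by (auto simp: Sigma_m_def PiE_def extensional_def)
  moreover have "compactin (product_topology (\<lambda>_. euclidean) UNIV) (PiE UNIV (\<lambda>_::nat. {1..m::nat}))"
    by (subst compactin_PiE) (auto intro: finite_imp_compact)
  ultimately show ?thesis
    by (simp add: euclidean_product_topology)
qed



locale ifs =
  fixes m :: nat and T T' :: "nat \<Rightarrow> real \<Rightarrow> real"
  assumes maps_into: "\<And>i. i \<in> {1..m} \<Longrightarrow> T i ` {0..1} \<subseteq> {0..1}"
    and deriv: "\<And>i x. i \<in> {1..m} \<Longrightarrow> x \<in> {0..1} \<Longrightarrow>
                  (T i has_real_derivative T' i x) (at x within {0..1})"
    and C1: "\<And>i. i \<in> {1..m} \<Longrightarrow> continuous_on {0..1} (T' i)"
    and deriv_pos: "\<And>i x. i \<in> {1..m} \<Longrightarrow> x \<in> {0..1} \<Longrightarrow> T' i x > 0"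
    and disjoint: "\<And>i j. i \<in> {1..m} \<Longrightarrow> j \<in> {1..m} \<Longrightarrow> i \<noteq> j \<Longrightarrow>
                  T i ` {0<..<1} \<inter> T j ` {0<..<1} = {}"
    and diam_unif: "\<forall>\<epsilon>>0. \<exists>N. \<forall>n\<ge>N. \<forall>\<eta>\<in>Sigma_m m.
                  diameter (comp_word T \<eta> n ` {0..1}) < \<epsilon>"
    and fixes_pt: "\<And>i. i \<in> {1..m} \<Longrightarrow> T i (coding T (const_word i)) = coding T (const_word i)"
    and deriv_fix_le: "\<And>i. i \<in> {1..m} \<Longrightarrow> T' i (coding T (const_word i)) \<le> 1"
    and deriv_lt: "\<And>i x. i \<in> {1..m} \<Longrightarrow> x \<in> {0..1} \<Longrightarrow> x \<noteq> coding T (const_word i) \<Longrightarrow>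
                  T' i x < 1"
begin

lemma T_cont: "i \<in> {1..m} \<Longrightarrow> continuous_on {0..1} (T i)"
  using deriv DERIV_continuous continuous_on_eq_continuous_within by blast

lemma cw_in: "\<eta> \<in> Sigma_m m \<Longrightarrow> y \<in> {0..1} \<Longrightarrow> comp_word T \<eta> n y \<in> {0..1}"
  using comp_word_in[of m T, OF maps_into] by blast

lemma coding_lim:
  assumes "\<eta> \<in> Sigma_m m"
  shows "(\<lambda>n. comp_word T \<eta> n 0) \<longlonglongrightarrow> coding T \<eta>"
proof -
  have "Cauchy (\<lambda>n. comp_word T \<eta> n 0)"
  proof (rule metric_CauchyI)
    fix e :: real assume "e > 0"
    then obtain N where N: "\<forall>n\<ge>N. \<forall>\<eta>\<in>Sigma_m m. diameter (comp_word T \<eta> n ` {0..1}) < e"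
      using diam_unif by blast
    have "dist (comp_word T \<eta> p 0) (comp_word T \<eta> q 0) < e" if "p \<ge> N" "q \<ge> N" for p q
    proof -
      define r where "r = min p q"
      have mem: "comp_word T \<eta> s 0 \<in> comp_word T \<eta> r ` {0..1}" if "s \<ge> r" for s
      proof -
        have "comp_word T \<eta> s 0 = comp_word T \<eta> r (comp_word T ((shift ^^ r) \<eta>) (s - r) 0)"
          using comp_word_add[of T \<eta> r "s - r" 0] that by simp
        moreover have "comp_word T ((shift ^^ r) \<eta>) (s - r) 0 \<in> {0..1}"
          using cw_in funpow_shift_Sigma assms by simp
        ultimately show ?thesis by blast
      qed
      have bd: "bounded (comp_word T \<eta> r ` {0..1})"
        by (rule bounded_subset[of "{0..1}"]) (use cw_in assms in auto)
      have "dist (comp_word T \<eta> p 0) (comp_word T \<eta> q 0) \<le> diameter (comp_word T \<eta> r ` {0..1})"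
        by (rule diameter_bounded_bound[OF bd]) (use mem r_def in auto)
      also have "\<dots> < e" using N assms that r_def by simp
      finally show ?thesis .
    qed
    then show "\<exists>M. \<forall>p\<ge>M. \<forall>q\<ge>M. dist (comp_word T \<eta> p 0) (comp_word T \<eta> q 0) < e" by blast
  qed
  then have "convergent (\<lambda>n. comp_word T \<eta> n 0)" by (simp add: Cauchy_convergent_iff)
  then show ?thesis unfolding coding_def by (simp add: convergent_LIMSEQ_iff)
qed

lemma coding_in: "\<eta> \<in> Sigma_m m \<Longrightarrow> coding T \<eta> \<in> {0..1}"
proof -
  assume a: "\<eta> \<in> Sigma_m m"
  have "\<forall>n. comp_word T \<eta> n 0 \<in> {0..1}" using cw_in a by simp
  then show ?thesis using closed_sequentially[OF closed_atLeastAtMost] coding_lim[OF a] by metis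
qed

lemma coding_eq:
  assumes "\<eta> \<in> Sigma_m m"
  shows "coding T \<eta> = T (\<eta> 0) (coding T (shift \<eta>))"
proof -
  have i: "\<eta> 0 \<in> {1..m}" using assms by (simp add: Sigma_m_def)
  have s: "shift \<eta> \<in> Sigma_m m" using assms shift_Sigma by blast
  have "(\<lambda>n. T (\<eta> 0) (comp_word T (shift \<eta>) n 0)) \<longlonglongrightarrow> T (\<eta> 0) (coding T (shift \<eta>))"
    by (rule continuous_on_tendsto_compose[OF T_cont[OF i] coding_lim[OF s] coding_in[OF s]])
       (use cw_in s in auto)
  moreover have "(\<lambda>n. T (\<eta> 0) (comp_word T (shift \<eta>) n 0)) = (\<lambda>n. comp_word T \<eta> (Suc n) 0)"
    by (simp add: comp_word_Suc)
  moreover have "(\<lambda>n. comp_word T \<eta> (Suc n) 0) \<longlonglongrightarrow> coding T \<eta>"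
    using coding_lim[OF assms] by (rule LIMSEQ_Suc)
  ultimately show ?thesis using LIMSEQ_unique by metis
qed

definition xp :: "nat \<Rightarrow> real" where "xp i = coding T (const_word i)"

lemma xp_in: "i \<in> {1..m} \<Longrightarrow> xp i \<in> {0..1}"
  using coding_in const_word_Sigma xp_def by simp

lemma T_strict:
  assumes i: "i \<in> {1..m}" and xy: "x < y" "x \<in> {0..1}" "y \<in> {0..1}"
  shows "T i x < T i y"
proof -
  have "\<exists>z\<in>{x..y}. T i y - T i x = (\<lambda>h. T' i z * h) (y - x)"
  proof (rule mvt_very_simple)
    fix z assume "x \<le> z" "z \<le> y"
    then have "z \<in> {0..1}" using xy by auto
    have "(T i has_real_derivative T' i z) (at z within {x..y})"
      by (rule has_field_derivative_subset[OF deriv[OF i \<open>z \<in> {0..1}\<close>]]) (use xy in auto)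
    then show "(T i has_derivative (\<lambda>h. T' i z * h)) (at z within {x..y})"
      by (simp add: has_field_derivative_def)
  qed (use xy in simp)
  then obtain z where z: "z \<in> {x..y}" "T i y - T i x = T' i z * (y - x)" by auto
  have "z \<in> {0..1}" using z xy by auto
  then have "T' i z > 0" using deriv_pos i by simp
  then have "T' i z * (y - x) > 0" using xy by simp
  then show ?thesis using z by linarith
qed

lemma T'_le1: "i \<in> {1..m} \<Longrightarrow> y \<in> {0..1} \<Longrightarrow> T' i y \<le> 1"
  using deriv_lt[of i y] deriv_fix_le[of i] by (cases "y = coding T (const_word i)") auto

end


lemma finite_pos_choice_aux:
  assumes "finite S" "\<forall>j\<in>S. \<exists>d::real>0. \<forall>d'. 0 < d' \<and> d' \<le> d \<longrightarrow> P j d'"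
  shows "\<exists>d>0. \<forall>d'. 0 < d' \<and> d' \<le> d \<longrightarrow> (\<forall>j\<in>S. P j d')"
  using assms
proof (induction S rule: finite_induct)
  case empty then show ?case by (intro exI[of _ 1]) auto
next
  case (insert a S)
  then obtain d where d: "d > 0" "\<forall>d'. 0 < d' \<and> d' \<le> d \<longrightarrow> (\<forall>j\<in>S. P j d')" by auto
  obtain e where e: "e > 0" "\<forall>d'. 0 < d' \<and> d' \<le> e \<longrightarrow> P a d'" using insert.prems by auto
  show ?case using d e by (intro exI[of _ "min d e"]) auto
qed

lemma finite_pos_choice:
  assumes "finite S" "\<forall>j\<in>S. \<exists>d::real>0. \<forall>d'. 0 < d' \<and> d' \<le> d \<longrightarrow> P j d'"
  shows "\<exists>d>0. \<forall>j\<in>S. P j d"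
  using finite_pos_choice_aux[OF assms] by auto



context ifs begin

lemma T_fix: "i \<in> {1..m} \<Longrightarrow> T i (xp i) = xp i"
  using fixes_pt xp_def by simp

lemma T_inj: "i \<in> {1..m} \<Longrightarrow> x \<in> {0..1} \<Longrightarrow> y \<in> {0..1} \<Longrightarrow> x \<noteq> y \<Longrightarrow> T i x \<noteq> T i y"
  using T_strict by (metis linorder_neq_iff order_less_irrefl)

lemma nbhd:
  assumes i: "i \<in> {1..m}"
  shows "\<exists>c>0. \<forall>w\<in>{0..1}. \<bar>w - xp i\<bar> < c \<and> w \<noteq> xp i \<longrightarrow> w \<in> T i ` {0<..<1}"
proof -
  define x where "x = xp i"
  have x: "x \<in> {0..1}" "T i x = x" using xp_in[OF i] T_fix[OF i] x_def by auto
  define b where "b = (x + 1) / 2"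
  define a where "a = x / 2"
  define cp where "cp = (if x < 1 then T i b - x else 1)"
  define cm where "cm = (if x > 0 then x - T i a else 1)"
  have cp: "cp > 0"
  proof (cases "x < 1")
    case True
    have "T i x < T i b" using T_strict[OF i, of x b] x True unfolding b_def by auto
    then show ?thesis using True x by (simp add: cp_def)
  qed (simp add: cp_def)
  have cm: "cm > 0"
  proof (cases "x > 0")
    case True
    have "T i a < T i x" using T_strict[OF i, of a x] x True unfolding a_def by auto
    then show ?thesis using True x by (simp add: cm_def)
  qed (simp add: cm_def)
  have "\<forall>w\<in>{0..1}. \<bar>w - x\<bar> < min cp cm \<and> w \<noteq> x \<longrightarrow> w \<in> T i ` {0<..<1}"
  proof (intro ballI impI)
    fix w assume w: "w \<in> {0..1}" "\<bar>w - x\<bar> < min cp cm \<and> w \<noteq> x"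
    show "w \<in> T i ` {0<..<1}"
    proof (cases "w > x")
      case True
      then have x1: "x < 1" using w by auto
      then have wb: "w < T i b" using w cp_def by auto
      have b: "x \<le> b" "b \<le> 1" using x1 x unfolding b_def by auto
      have "\<exists>z. x \<le> z \<and> z \<le> b \<and> T i z = w"
        by (rule IVT') (use x wb True b in \<open>auto intro: continuous_on_subset[OF T_cont[OF i]]\<close>)
      then obtain z where z: "x \<le> z" "z \<le> b" "T i z = w" by auto
      have "z \<noteq> x" using z x True by auto
      moreover have "z \<noteq> b" using z wb by auto
      ultimately have "z \<in> {0<..<1}" using z x x1 b by auto
      then show ?thesis using z by auto
    next
      case False
      then have lt: "w < x" using w by auto
      then have x1: "x > 0" using w by auto
      then have wa: "w > T i a" using w cm_def by auto
      have a: "0 \<le> a" "a \<le> x" using x1 x unfolding a_def by auto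
      have "\<exists>z. a \<le> z \<and> z \<le> x \<and> T i z = w"
        by (rule IVT') (use x wa lt a in \<open>auto intro: continuous_on_subset[OF T_cont[OF i]]\<close>)
      then obtain z where z: "a \<le> z" "z \<le> x" "T i z = w" by auto
      have "z \<noteq> x" using z x lt by auto
      moreover have "z \<noteq> a" using z wa by auto
      ultimately have "z \<in> {0<..<1}" using z x x1 a by auto
      then show ?thesis using z by auto
    qed
  qed
  then show ?thesis using cp cm x_def by (intro exI[of _ "min cp cm"]) auto
qed

lemma not_in_other:
  assumes i: "i \<in> {1..m}" and j: "j \<in> {1..m}" and ij: "j \<noteq> i" and y: "y \<in> {0..1}"
  shows "T j y \<noteq> xp i"
proof
  assume eq: "T j y = xp i"
  obtain c where c: "c > 0" "\<forall>w\<in>{0..1}. \<bar>w - xp i\<bar> < c \<and> w \<noteq> xp i \<longrightarrow> w \<in> T i ` {0<..<1}"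
    using nbhd[OF i] by auto
  obtain e where e: "e > 0" "\<forall>z\<in>{0..1}. dist z y < e \<longrightarrow> dist (T j z) (T j y) < c"
    using T_cont[OF j] y c(1) unfolding continuous_on_iff by blast
  define z where "z = (if y \<le> 1/2 then y + min e (1/2) / 2 else y - min e (1/2) / 2)"
  have z01: "z \<in> {0<..<1}" using y e(1) unfolding z_def by (auto simp: min_def)
  have zy: "z \<noteq> y" "dist z y < e" using e(1) unfolding z_def by (auto simp: dist_real_def min_def)
  have "dist (T j z) (T j y) < c" using e(2) z01 zy by auto
  then have "\<bar>T j z - xp i\<bar> < c" using eq by (simp add: dist_real_def)
  moreover have "T j z \<noteq> xp i" using T_inj[OF j, of z y] z01 y zy eq by auto
  moreover have "T j z \<in> {0..1}" using maps_into[OF j] z01 by (auto simp: image_subset_iff)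
  ultimately have "T j z \<in> T i ` {0<..<1}" using c(2) by blast
  moreover have "T j z \<in> T j ` {0<..<1}" using z01 by blast
  ultimately show False using disjoint[OF i j] ij by blast
qed

lemma sep_other:
  assumes i: "i \<in> {1..m}"
  shows "\<exists>d>0. \<forall>j\<in>{1..m}. j \<noteq> i \<longrightarrow> (\<forall>y\<in>{0..1}. d \<le> \<bar>T j y - xp i\<bar>)"
proof -
  have "\<forall>j\<in>{1..m}. \<exists>d>0. \<forall>d'. 0 < d' \<and> d' \<le> d \<longrightarrow> (j \<noteq> i \<longrightarrow> (\<forall>y\<in>{0..1}. d' \<le> \<bar>T j y - xp i\<bar>))"
  proof
    fix j assume j: "j \<in> {1..m}"
    have "continuous_on {0..1} (\<lambda>y. \<bar>T j y - xp i\<bar>)"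
      by (intro continuous_intros T_cont[OF j])
    then obtain y0 where y0: "y0 \<in> {0..1}" "\<forall>y\<in>{0..1}. \<bar>T j y0 - xp i\<bar> \<le> \<bar>T j y - xp i\<bar>"
      using continuous_attains_inf[of "{0..1::real}" "\<lambda>y. \<bar>T j y - xp i\<bar>"] by auto
    show "\<exists>d>0. \<forall>d'. 0 < d' \<and> d' \<le> d \<longrightarrow> (j \<noteq> i \<longrightarrow> (\<forall>y\<in>{0..1}. d' \<le> \<bar>T j y - xp i\<bar>))"
    proof (cases "j = i")
      case True then show ?thesis by (intro exI[of _ 1]) auto
    next
      case False
      then have "\<bar>T j y0 - xp i\<bar> > 0" using not_in_other[OF i j False y0(1)] by auto
      then show ?thesis using y0 by (intro exI[of _ "\<bar>T j y0 - xp i\<bar>"]) force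
    qed
  qed
  then show ?thesis using finite_pos_choice[of "{1..m}"] by auto
qed

lemma inv_cont:
  assumes i: "i \<in> {1..m}" and dL: "dL > 0"
  shows "\<exists>d'>0. \<forall>y\<in>{0..1}. \<bar>T i y - xp i\<bar> < d' \<longrightarrow> \<bar>y - xp i\<bar> < dL"
proof -
  define K where "K = {0..1} \<inter> {y. dL \<le> \<bar>y - xp i\<bar>}"
  show ?thesis
  proof (cases "K = {}")
    case True
    then show ?thesis unfolding K_def by (intro exI[of _ 1]) force
  next
    case False
    have "closed {y::real. dL \<le> \<bar>y - xp i\<bar>}"
      by (intro closed_Collect_le continuous_intros)
    then have "compact K" unfolding K_def
      by (intro compact_Int_closed) auto
    moreover have "continuous_on K (\<lambda>y. \<bar>T i y - xp i\<bar>)"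
      by (intro continuous_intros continuous_on_subset[OF T_cont[OF i]]) (auto simp: K_def)
    ultimately obtain y0 where y0: "y0 \<in> K" "\<forall>y\<in>K. \<bar>T i y0 - xp i\<bar> \<le> \<bar>T i y - xp i\<bar>"
      using continuous_attains_inf[of K "\<lambda>y. \<bar>T i y - xp i\<bar>"] False by auto
    have "y0 \<noteq> xp i" using y0(1) dL unfolding K_def by auto
    then have "T i y0 \<noteq> T i (xp i)" using T_inj[OF i] xp_in[OF i] y0(1) K_def by auto
    then have pos: "\<bar>T i y0 - xp i\<bar> > 0" using T_fix[OF i] by auto
    show ?thesis
    proof (intro exI[of _ "\<bar>T i y0 - xp i\<bar>"] conjI pos ballI impI)
      fix y assume y: "y \<in> {0..1}" "\<bar>T i y - xp i\<bar> < \<bar>T i y0 - xp i\<bar>"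
      show "\<bar>y - xp i\<bar> < dL"
      proof (rule ccontr)
        assume "\<not> \<bar>y - xp i\<bar> < dL"
        then have "y \<in> K" using y K_def by auto
        then show False using y0(2) y(2) by force
      qed
    qed
  qed
qed

lemma cylinder_near:
  assumes i: "i \<in> {1..m}"
  shows "\<exists>\<delta>>0. \<forall>\<eta>\<in>Sigma_m m. \<bar>coding T \<eta> - xp i\<bar> < \<delta> \<longrightarrow> (\<forall>k<L. \<eta> k = i)"
proof (induction L)
  case 0 then show ?case by (intro exI[of _ 1]) auto
next
  case (Suc L)
  then obtain dL where dL: "dL > 0" "\<forall>\<eta>\<in>Sigma_m m. \<bar>coding T \<eta> - xp i\<bar> < dL \<longrightarrow> (\<forall>k<L. \<eta> k = i)"
    by auto
  obtain d' where d': "d' > 0" "\<forall>y\<in>{0..1}. \<bar>T i y - xp i\<bar> < d' \<longrightarrow> \<bar>y - xp i\<bar> < dL"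
    using inv_cont[OF i dL(1)] by auto
  obtain d where d: "d > 0" "\<forall>j\<in>{1..m}. j \<noteq> i \<longrightarrow> (\<forall>y\<in>{0..1}. d \<le> \<bar>T j y - xp i\<bar>)"
    using sep_other[OF i] by auto
  show ?case
  proof (intro exI[of _ "min d d'"] conjI ballI impI allI)
    show "min d d' > 0" using d d' by simp
    fix \<eta> k assume \<eta>: "\<eta> \<in> Sigma_m m" and cl: "\<bar>coding T \<eta> - xp i\<bar> < min d d'" and k: "k < Suc L"
    have s: "shift \<eta> \<in> Sigma_m m" using \<eta> shift_Sigma by blast
    have ce: "coding T \<eta> = T (\<eta> 0) (coding T (shift \<eta>))" using coding_eq[OF \<eta>] .
    have j: "\<eta> 0 \<in> {1..m}" using \<eta> by (simp add: Sigma_m_def)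
    have h0: "\<eta> 0 = i"
    proof (rule ccontr)
      assume "\<eta> 0 \<noteq> i"
      then have "d \<le> \<bar>coding T \<eta> - xp i\<bar>" using d(2) j coding_in[OF s] ce by auto
      then show False using cl by simp
    qed
    have "\<bar>coding T (shift \<eta>) - xp i\<bar> < dL"
      using d'(2) coding_in[OF s] cl ce h0 by auto
    then have hs: "\<forall>k<L. \<eta> (Suc k) = i" using dL(2) s by (auto simp: shift_def)
    show "\<eta> k = i" using h0 hs k by (cases k) auto
  qed
qed

definition Iset where "Iset = {i \<in> {1..m}. T' i (xp i) = 1}"

lemma deriv_close:
  assumes \<delta>: "\<delta> > 0"
  shows "\<exists>c>0. c < 1 \<and> (\<forall>j\<in>{1..m}. \<forall>y\<in>{0..1}. c \<le> T' j y \<longrightarrow> j \<in> Iset \<and> \<bar>y - xp j\<bar> < \<delta>)"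
proof -
  have "\<forall>j\<in>{1..m}. \<exists>d>0. \<forall>d'. 0 < d' \<and> d' \<le> d \<longrightarrow> (\<forall>y\<in>{0..1}. 1 - d' \<le> T' j y \<longrightarrow> j \<in> Iset \<and> \<bar>y - xp j\<bar> < \<delta>)"
  proof
    fix j assume j: "j \<in> {1..m}"
    define K where "K = (if T' j (xp j) = 1 then {0..1} \<inter> {y. \<delta> \<le> \<bar>y - xp j\<bar>} else {0..1})"
    have Kfact: "y \<in> {0..1} \<Longrightarrow> y \<notin> K \<Longrightarrow> j \<in> Iset \<and> \<bar>y - xp j\<bar> < \<delta>" for y
      using j by (auto simp: K_def Iset_def split: if_splits)
    show "\<exists>d>0. \<forall>d'. 0 < d' \<and> d' \<le> d \<longrightarrow> (\<forall>y\<in>{0..1}. 1 - d' \<le> T' j y \<longrightarrow> j \<in> Iset \<and> \<bar>y - xp j\<bar> < \<delta>)"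
    proof (cases "K = {}")
      case True then show ?thesis using Kfact by (intro exI[of _ 1]) auto
    next
      case False
      have "closed {y::real. \<delta> \<le> \<bar>y - xp j\<bar>}"
        by (intro closed_Collect_le continuous_intros)
      then have "compact K" unfolding K_def
        by (auto intro: compact_Int_closed)
      moreover have "continuous_on K (T' j)"
        by (rule continuous_on_subset[OF C1[OF j]]) (auto simp: K_def)
      ultimately obtain y0 where y0: "y0 \<in> K" "\<forall>y\<in>K. T' j y \<le> T' j y0"
        using continuous_attains_sup[of K "T' j"] False by auto
      have y01: "y0 \<in> {0..1}" using y0 K_def by (auto split: if_splits)
      have "T' j y0 < 1"
      proof (cases "T' j (xp j) = 1")
        case True
        then have "y0 \<noteq> xp j" using y0(1) \<delta> K_def by auto
        then show ?thesis using deriv_lt[OF j y01] xp_def by simp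
      next
        case False
        then show ?thesis using deriv_lt[OF j y01] xp_def deriv_fix_le[OF j]
          by (cases "y0 = xp j") (auto simp: less_le)
      qed
      then show ?thesis
      proof (intro exI[of _ "(1 - T' j y0) / 2"] conjI allI impI ballI)
        fix d' y assume "0 < d' \<and> d' \<le> (1 - T' j y0) / 2" "y \<in> {0..1}" "1 - d' \<le> T' j y"
        then have "y \<notin> K" using y0(2) by force
        then show "j \<in> Iset" "\<bar>y - xp j\<bar> < \<delta>" using Kfact \<open>y \<in> {0..1}\<close> by auto
      qed simp
    qed
  qed
  from finite_pos_choice_aux[OF finite_atLeastAtMost this] obtain d0 where
    d0: "d0 > 0" "\<forall>d'. 0 < d' \<and> d' \<le> d0 \<longrightarrow> (\<forall>j\<in>{1..m}. \<forall>y\<in>{0..1}. 1 - d' \<le> T' j y \<longrightarrow> j \<in> Iset \<and> \<bar>y - xp j\<bar> < \<delta>)"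
    by blast
  define d where "d = min d0 (1/2)"
  have "d > 0" "d \<le> d0" using d0 by (auto simp: d_def)
  then have d: "d > 0" "\<forall>j\<in>{1..m}. \<forall>y\<in>{0..1}. 1 - min d (1/2) \<le> T' j y \<longrightarrow> j \<in> Iset \<and> \<bar>y - xp j\<bar> < \<delta>"
    using d0(2) by (auto simp: d_def)
  show ?thesis using d by (intro exI[of _ "1 - min d (1/2)"]) auto
qed

end


lemma f_cyl:
  assumes f: "continuous_on (Sigma_m m) f" and i: "i \<in> {1..m}" and e: "(\<epsilon>::real) > 0"
  shows "\<exists>L. \<forall>\<eta>\<in>Sigma_m m. (\<forall>k<L. \<eta> k = i) \<longrightarrow> \<bar>f \<eta> - f (const_word i)\<bar> < \<epsilon>"
proof -
  have x: "const_word i \<in> Sigma_m m" using const_word_Sigma[OF i] .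
  obtain A where A: "open A" "const_word i \<in> A" "\<forall>y\<in>Sigma_m m. y \<in> A \<longrightarrow> f y \<in> ball (f (const_word i)) \<epsilon>"
    using f x e unfolding continuous_on_topological by (metis centre_in_ball open_ball)
  have "openin (product_topology (\<lambda>i. euclidean) UNIV) A" using A(1) unfolding open_fun_def .
  from product_topology_open_contains_basis[OF this A(2)] obtain X where
    X: "const_word i \<in> (\<Pi>\<^sub>E k\<in>UNIV. X k)" "finite {k. X k \<noteq> topspace euclidean}" "(\<Pi>\<^sub>E k\<in>UNIV. X k) \<subseteq> A"
    by auto
  obtain L where L: "\<forall>k\<in>{k. X k \<noteq> UNIV}. k < L"
    using X(2) finite_nat_set_iff_bounded by auto
  show ?thesis
  proof (intro exI[of _ L] ballI impI)
    fix \<eta> assume \<eta>: "\<eta> \<in> Sigma_m m" "\<forall>k<L. \<eta> k = i"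
    have "\<eta> k \<in> X k" for k
    proof (cases "X k = UNIV")
      case False
      then have "k < L" using L by auto
      then have "\<eta> k = i" using \<eta> by auto
      moreover have "const_word i k \<in> X k" using X(1) by auto
      ultimately show ?thesis by (simp add: const_word_def)
    qed simp
    then have "\<eta> \<in> A" using X(3) by (auto simp: PiE_def extensional_def)
    then have "f \<eta> \<in> ball (f (const_word i)) \<epsilon>" using A(3) \<eta> by auto
    then show "\<bar>f \<eta> - f (const_word i)\<bar> < \<epsilon>" by (simp add: dist_real_def abs_minus_commute)
  qed
qed

lemma avg_bound:
  assumes "\<forall>\<eta>\<in>Sigma_m m. F \<eta> \<le> a + C * G \<eta>" "\<omega> \<in> Sigma_m m" "n > 0"
  shows "birkhoff_avg n F \<omega> \<le> a + C * birkhoff_avg n G \<omega>"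
proof -
  have "(\<Sum>i<n. F ((shift ^^ i) \<omega>)) \<le> (\<Sum>i<n. a + C * G ((shift ^^ i) \<omega>))"
    by (rule sum_mono) (use assms funpow_shift_Sigma in blast)
  also have "\<dots> = real n * a + C * (\<Sum>i<n. G ((shift ^^ i) \<omega>))"
    by (simp add: sum.distrib sum_distrib_left)
  finally have "(1 / real n) * (\<Sum>i<n. F ((shift ^^ i) \<omega>)) \<le> (1 / real n) * (real n * a + C * (\<Sum>i<n. G ((shift ^^ i) \<omega>)))"
    using assms(3) by (intro mult_left_mono) auto
  then show ?thesis using assms(3) by (simp add: birkhoff_avg_def field_simps)
qed

lemma avg_bound2:
  assumes "\<forall>\<eta>\<in>Sigma_m m. a - C * G \<eta> \<le> F \<eta>" "\<omega> \<in> Sigma_m m" "n > 0"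
  shows "a - C * birkhoff_avg n G \<omega> \<le> birkhoff_avg n F \<omega>"
proof -
  have "\<forall>\<eta>\<in>Sigma_m m. - F \<eta> \<le> - a + C * G \<eta>" using assms(1) by force
  from avg_bound[OF this assms(2,3)] have "birkhoff_avg n (\<lambda>\<eta>. - F \<eta>) \<omega> \<le> - a + C * birkhoff_avg n G \<omega>" .
  moreover have "birkhoff_avg n (\<lambda>\<eta>. - F \<eta>) \<omega> = - birkhoff_avg n F \<omega>"
    by (simp add: birkhoff_avg_def sum_negf)
  ultimately show ?thesis by simp
qed

lemma lim_in:
  fixes a b :: "nat \<Rightarrow> real"
  assumes "\<And>\<epsilon>. \<epsilon> > 0 \<Longrightarrow> \<exists>C. eventually (\<lambda>n. a n \<le> hi + \<epsilon> + C * b n \<and> lo - \<epsilon> - C * b n \<le> a n) sequentially"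
    "b \<longlonglongrightarrow> 0" "convergent a"
  shows "lim a \<in> {lo..hi}"
proof -
  have a: "a \<longlonglongrightarrow> lim a" using assms(3) convergent_LIMSEQ_iff by blast
  have up: "lim a \<le> hi + \<epsilon>" and lo: "lo - \<epsilon> \<le> lim a" if e: "\<epsilon> > 0" for \<epsilon>
  proof -
    obtain C where C: "eventually (\<lambda>n. a n \<le> hi + \<epsilon> + C * b n \<and> lo - \<epsilon> - C * b n \<le> a n) sequentially"
      using assms(1)[OF e] by blast
    have t1: "(\<lambda>n. hi + \<epsilon> + C * b n) \<longlonglongrightarrow> hi + \<epsilon> + C * 0"
      by (intro tendsto_intros assms(2))
    have t2: "(\<lambda>n. lo - \<epsilon> - C * b n) \<longlonglongrightarrow> lo - \<epsilon> - C * 0"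
      by (intro tendsto_intros assms(2))
    show "lim a \<le> hi + \<epsilon>"
      using tendsto_le[OF trivial_limit_sequentially t1 a] C by (simp add: eventually_mono)
    show "lo - \<epsilon> \<le> lim a"
      using tendsto_le[OF trivial_limit_sequentially a t2] C by (simp add: eventually_mono)
  qed
  have "lim a \<le> hi"
  proof (rule ccontr)
    assume "\<not> lim a \<le> hi"
    then have "(lim a - hi) / 2 > 0" by simp
    from up[OF this] show False using \<open>\<not> lim a \<le> hi\<close> by (simp add: field_simps)
  qed
  moreover have "lo \<le> lim a"
  proof (rule ccontr)
    assume "\<not> lo \<le> lim a"
    then have "(lo - lim a) / 2 > 0" by simp
    from lo[OF this] show False using \<open>\<not> lo \<le> lim a\<close> by (simp add: field_simps)
  qed
  ultimately show ?thesis by simp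
qed



context ifs begin

lemma core:
  assumes f: "continuous_on (Sigma_m m) f" and ne: "Iset \<noteq> {}" and e: "\<epsilon> > 0"
  shows "\<exists>C. \<forall>\<eta>\<in>Sigma_m m. f \<eta> \<le> Max ((\<lambda>i. f (const_word i)) ` Iset) + \<epsilon> + C * geom_pot T T' \<eta>
            \<and> Min ((\<lambda>i. f (const_word i)) ` Iset) - \<epsilon> - C * geom_pot T T' \<eta> \<le> f \<eta>"
proof -
  define hi where "hi = Max ((\<lambda>i. f (const_word i)) ` Iset)"
  define lo where "lo = Min ((\<lambda>i. f (const_word i)) ` Iset)"
  have fin: "finite Iset" unfolding Iset_def by simp
  have Isub: "Iset \<subseteq> {1..m}" unfolding Iset_def by auto
  have hilo: "lo \<le> f (const_word i)" "f (const_word i) \<le> hi" if "i \<in> Iset" for i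
    using that fin unfolding hi_def lo_def by auto
  have "bounded (f ` Sigma_m m)"
    by (rule compact_imp_bounded[OF compact_continuous_image[OF f Sigma_compact]])
  then obtain M where M: "\<forall>\<eta>\<in>Sigma_m m. \<bar>f \<eta>\<bar> \<le> M" unfolding bounded_iff by auto
  have "\<forall>i\<in>Iset. \<exists>L. \<forall>\<eta>\<in>Sigma_m m. (\<forall>k<L. \<eta> k = i) \<longrightarrow> \<bar>f \<eta> - f (const_word i)\<bar> < \<epsilon>"
    using f_cyl[OF f _ e] Isub by blast
  then obtain Lf where Lf: "\<forall>i\<in>Iset. \<forall>\<eta>\<in>Sigma_m m. (\<forall>k<Lf i. \<eta> k = i) \<longrightarrow> \<bar>f \<eta> - f (const_word i)\<bar> < \<epsilon>"
    by metis
  define L where "L = Max (Lf ` Iset)"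
  have cyl: "\<bar>f \<eta> - f (const_word i)\<bar> < \<epsilon>" if "i \<in> Iset" "\<eta> \<in> Sigma_m m" "\<forall>k<L. \<eta> k = i" for i \<eta>
  proof -
    have "Lf i \<le> L" using that(1) fin unfolding L_def by auto
    then show ?thesis using Lf that by auto
  qed
  have "\<forall>i\<in>Iset. \<exists>d>0. \<forall>d'. 0 < d' \<and> d' \<le> d \<longrightarrow> (\<forall>\<eta>\<in>Sigma_m m. \<bar>coding T \<eta> - xp i\<bar> < d' \<longrightarrow> (\<forall>k<L. \<eta> k = i))"
  proof
    fix i assume "i \<in> Iset"
    then have "i \<in> {1..m}" using Isub by auto
    from cylinder_near[OF this, of L] obtain d where
      "d > 0" "\<forall>\<eta>\<in>Sigma_m m. \<bar>coding T \<eta> - xp i\<bar> < d \<longrightarrow> (\<forall>k<L. \<eta> k = i)" by auto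
    then show "\<exists>d>0. \<forall>d'. 0 < d' \<and> d' \<le> d \<longrightarrow> (\<forall>\<eta>\<in>Sigma_m m. \<bar>coding T \<eta> - xp i\<bar> < d' \<longrightarrow> (\<forall>k<L. \<eta> k = i))"
      by (intro exI[of _ d]) auto
  qed
  from finite_pos_choice[OF fin this] obtain \<delta> where
    \<delta>: "\<delta> > 0" "\<forall>i\<in>Iset. \<forall>\<eta>\<in>Sigma_m m. \<bar>coding T \<eta> - xp i\<bar> < \<delta> \<longrightarrow> (\<forall>k<L. \<eta> k = i)" by auto
  obtain c where c: "c > 0" "c < 1" "\<forall>j\<in>{1..m}. \<forall>y\<in>{0..1}. c \<le> T' j y \<longrightarrow> j \<in> Iset \<and> \<bar>y - xp j\<bar> < \<delta>"
    using deriv_close[OF \<delta>(1)] by auto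
  define \<gamma> where "\<gamma> = - ln c"
  have \<gamma>: "\<gamma> > 0" using c unfolding \<gamma>_def by simp
  define C where "C = (2 * \<bar>M\<bar> + \<bar>hi\<bar> + \<bar>lo\<bar>) / \<gamma>"
  have C0: "C \<ge> 0" using \<gamma> unfolding C_def by simp
  have C\<gamma>: "C * \<gamma> = 2 * \<bar>M\<bar> + \<bar>hi\<bar> + \<bar>lo\<bar>" using \<gamma> unfolding C_def by simp
  have "\<forall>\<eta>\<in>Sigma_m m. f \<eta> \<le> hi + \<epsilon> + C * geom_pot T T' \<eta> \<and> lo - \<epsilon> - C * geom_pot T T' \<eta> \<le> f \<eta>"
  proof
    fix \<eta> assume \<eta>: "\<eta> \<in> Sigma_m m"
    define j where "j = \<eta> 0"
    define y where "y = coding T (shift \<eta>)"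
    have s: "shift \<eta> \<in> Sigma_m m" using \<eta> shift_Sigma by blast
    have j: "j \<in> {1..m}" using \<eta> unfolding j_def by (simp add: Sigma_m_def)
    have y: "y \<in> {0..1}" using coding_in[OF s] y_def by simp
    have g: "geom_pot T T' \<eta> = - ln (T' j y)" unfolding geom_pot_def j_def y_def ..
    have Tp: "T' j y > 0" "T' j y \<le> 1" using deriv_pos[OF j y] T'_le1[OF j y] by auto
    have g0: "geom_pot T T' \<eta> \<ge> 0" using g Tp by simp
    have fM: "\<bar>f \<eta>\<bar> \<le> M" using M \<eta> by auto
    show "f \<eta> \<le> hi + \<epsilon> + C * geom_pot T T' \<eta> \<and> lo - \<epsilon> - C * geom_pot T T' \<eta> \<le> f \<eta>"
    proof (cases "geom_pot T T' \<eta> \<le> \<gamma>")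
      case True
      then have "ln c \<le> ln (T' j y)" using g \<gamma>_def by simp
      then have "c \<le> T' j y" using c(1) Tp(1) by simp
      then have jI: "j \<in> Iset" and cl: "\<bar>y - xp j\<bar> < \<delta>" using c(3) j y by auto
      have "\<forall>k<L. shift \<eta> k = j" using \<delta>(2) jI s cl y_def by auto
      then have "\<forall>k<L. \<eta> k = j" using j_def by (auto simp: shift_def) (metis less_Suc_eq not0_implies_Suc order_less_trans lessI)
      then have "\<bar>f \<eta> - f (const_word j)\<bar> < \<epsilon>" using cyl jI \<eta> by blast
      moreover have "C * geom_pot T T' \<eta> \<ge> 0" using C0 g0 by simp
      ultimately show ?thesis using hilo[OF jI] by linarith
    next
      case False
      then have "C * geom_pot T T' \<eta> \<ge> C * \<gamma>" using C0 by (intro mult_left_mono) auto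
      then show ?thesis using C\<gamma> fM e by linarith
    qed
  qed
  then show ?thesis unfolding hi_def lo_def by blast
qed

end

theorem lemma6:
  fixes m :: nat
    and T T' :: "nat \<Rightarrow> real \<Rightarrow> real"
    and f :: "(nat \<Rightarrow> nat) \<Rightarrow> real"
    and nj :: "nat \<Rightarrow> nat"
    and \<omega> :: "nat \<Rightarrow> nat"
  assumes m_pos: "m \<ge> 1"
    and maps_into: "\<And>i. i \<in> {1..m} \<Longrightarrow> T i ` {0..1} \<subseteq> {0..1}"
    and deriv: "\<And>i x. i \<in> {1..m} \<Longrightarrow> x \<in> {0..1} \<Longrightarrow>
                  (T i has_real_derivative T' i x) (at x within {0..1})"
    and C1: "\<And>i. i \<in> {1..m} \<Longrightarrow> continuous_on {0..1} (T' i)"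
    and deriv_pos: "\<And>i x. i \<in> {1..m} \<Longrightarrow> x \<in> {0..1} \<Longrightarrow> T' i x > 0"
    and disjoint: "\<And>i j. i \<in> {1..m} \<Longrightarrow> j \<in> {1..m} \<Longrightarrow> i \<noteq> j \<Longrightarrow>
                  T i ` {0<..<1} \<inter> T j ` {0<..<1} = {}"
    and diam_unif: "\<forall>\<epsilon>>0. \<exists>N. \<forall>n\<ge>N. \<forall>\<eta>\<in>Sigma_m m.
                  diameter (comp_word T \<eta> n ` {0..1}) < \<epsilon>"
    and fixes_pt: "\<And>i. i \<in> {1..m} \<Longrightarrow> T i (coding T (const_word i)) = coding T (const_word i)"
    and deriv_fix_le: "\<And>i. i \<in> {1..m} \<Longrightarrow> T' i (coding T (const_word i)) \<le> 1"
    and deriv_lt: "\<And>i x. i \<in> {1..m} \<Longrightarrow> x \<in> {0..1} \<Longrightarrow> x \<noteq> coding T (const_word i) \<Longrightarrow>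
                  T' i x < 1"
    and indiff_ne: "{i \<in> {1..m}. T' i (coding T (const_word i)) = 1} \<noteq> {}"
    and f_cont: "continuous_on (Sigma_m m) f"
    and nj_mono: "strict_mono nj"
    and nj_pos: "\<And>j. nj j > 0"
    and \<omega>_in: "\<omega> \<in> Sigma_m m"
  shows "((\<lambda>j. birkhoff_avg (nj j) (geom_pot T T') \<omega>) \<longlonglongrightarrow> 0 \<and>
           convergent (\<lambda>j. birkhoff_avg (nj j) f \<omega>)
           \<longrightarrow> lim (\<lambda>j. birkhoff_avg (nj j) f \<omega>) \<in>
               {Min ((\<lambda>i. f (const_word i)) ` {i \<in> {1..m}. T' i (coding T (const_word i)) = 1})
                ..Max ((\<lambda>i. f (const_word i)) ` {i \<in> {1..m}. T' i (coding T (const_word i)) = 1})})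
       \<and>
         ((\<lambda>n. birkhoff_avg n (geom_pot T T') \<omega>) \<longlonglongrightarrow> 0 \<and>
           convergent (\<lambda>n. birkhoff_avg n f \<omega>)
           \<longrightarrow> lim (\<lambda>n. birkhoff_avg n f \<omega>) \<in>
               {Min ((\<lambda>i. f (const_word i)) ` {i \<in> {1..m}. T' i (coding T (const_word i)) = 1})
                ..Max ((\<lambda>i. f (const_word i)) ` {i \<in> {1..m}. T' i (coding T (const_word i)) = 1})})"
proof -
  interpret I: ifs m T T'
    by unfold_locales (use maps_into deriv C1 deriv_pos disjoint diam_unif fixes_pt deriv_fix_le deriv_lt in auto)
  have Ieq: "I.Iset = {i \<in> {1..m}. T' i (coding T (const_word i)) = 1}"
    unfolding I.Iset_def I.xp_def ..
  define hi where "hi = Max ((\<lambda>i. f (const_word i)) ` {i \<in> {1..m}. T' i (coding T (const_word i)) = 1})"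
  define lo where "lo = Min ((\<lambda>i. f (const_word i)) ` {i \<in> {1..m}. T' i (coding T (const_word i)) = 1})"
  have key: "\<exists>C. \<forall>\<eta>\<in>Sigma_m m. f \<eta> \<le> hi + \<epsilon> + C * geom_pot T T' \<eta>
            \<and> lo - \<epsilon> - C * geom_pot T T' \<eta> \<le> f \<eta>" if "\<epsilon> > 0" for \<epsilon>
    using I.core[OF f_cont _ that] indiff_ne Ieq unfolding hi_def lo_def by simp
  have bnd: "\<exists>C. \<forall>n>0. birkhoff_avg n f \<omega> \<le> hi + \<epsilon> + C * birkhoff_avg n (geom_pot T T') \<omega>
      \<and> lo - \<epsilon> - C * birkhoff_avg n (geom_pot T T') \<omega> \<le> birkhoff_avg n f \<omega>" if eps: "\<epsilon> > 0" for \<epsilon>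
  proof -
    obtain C where C: "\<forall>\<eta>\<in>Sigma_m m. f \<eta> \<le> hi + \<epsilon> + C * geom_pot T T' \<eta>
            \<and> lo - \<epsilon> - C * geom_pot T T' \<eta> \<le> f \<eta>" using key[OF eps] by blast
    have c1: "\<forall>\<eta>\<in>Sigma_m m. f \<eta> \<le> (hi + \<epsilon>) + C * geom_pot T T' \<eta>" using C by auto
    have c2: "\<forall>\<eta>\<in>Sigma_m m. (lo - \<epsilon>) - C * geom_pot T T' \<eta> \<le> f \<eta>" using C by auto
    show ?thesis using avg_bound[OF c1 \<omega>_in] avg_bound2[OF c2 \<omega>_in] by blast
  qed
  have P1: "lim (\<lambda>j. birkhoff_avg (nj j) f \<omega>) \<in> {lo..hi}"
    if "(\<lambda>j. birkhoff_avg (nj j) (geom_pot T T') \<omega>) \<longlonglongrightarrow> 0" "convergent (\<lambda>j. birkhoff_avg (nj j) f \<omega>)"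
  proof (rule lim_in[OF _ that])
    fix \<epsilon> :: real assume "\<epsilon> > 0"
    then obtain C where C: "\<forall>n>0. birkhoff_avg n f \<omega> \<le> hi + \<epsilon> + C * birkhoff_avg n (geom_pot T T') \<omega>
      \<and> lo - \<epsilon> - C * birkhoff_avg n (geom_pot T T') \<omega> \<le> birkhoff_avg n f \<omega>" using bnd by blast
    show "\<exists>C. \<forall>\<^sub>F j in sequentially. birkhoff_avg (nj j) f \<omega> \<le> hi + \<epsilon> + C * birkhoff_avg (nj j) (geom_pot T T') \<omega>
      \<and> lo - \<epsilon> - C * birkhoff_avg (nj j) (geom_pot T T') \<omega> \<le> birkhoff_avg (nj j) f \<omega>"
      using C nj_pos by (intro exI[of _ C] always_eventually) blast
  qed
  have P2: "lim (\<lambda>n. birkhoff_avg n f \<omega>) \<in> {lo..hi}"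
    if "(\<lambda>n. birkhoff_avg n (geom_pot T T') \<omega>) \<longlonglongrightarrow> 0" "convergent (\<lambda>n. birkhoff_avg n f \<omega>)"
  proof (rule lim_in[OF _ that])
    fix \<epsilon> :: real assume "\<epsilon> > 0"
    then obtain C where C: "\<forall>n>0. birkhoff_avg n f \<omega> \<le> hi + \<epsilon> + C * birkhoff_avg n (geom_pot T T') \<omega>
      \<and> lo - \<epsilon> - C * birkhoff_avg n (geom_pot T T') \<omega> \<le> birkhoff_avg n f \<omega>" using bnd by blast
    show "\<exists>C. \<forall>\<^sub>F n in sequentially. birkhoff_avg n f \<omega> \<le> hi + \<epsilon> + C * birkhoff_avg n (geom_pot T T') \<omega>
      \<and> lo - \<epsilon> - C * birkhoff_avg n (geom_pot T T') \<omega> \<le> birkhoff_avg n f \<omega>"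
      using C by (intro exI[of _ C]) (auto simp: eventually_sequentially intro!: exI[of _ 1])
  qed
  show ?thesis using P1 P2 unfolding hi_def lo_def by blast
qed

end
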